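(* Let $H_1$ and $H_2$ be two contextuality scenarios with $H_1\sim_{vcz}H_2$. Then any choice of $H_1^{vcz}$ and any choice of $H_2^{vcz}$ are observationally equivalent.
   Context: A contextuality scenario is a hypergraph $H=(V,E)$ (with $V$ finite and $E$ a set of subsets of $V$) with no isolated vertex, i.e. $V=\bigcup_{e\in E}e$. A probabilistic model on $H$ is a function $p:V\to[0,1]$ with $\sum_{v\in e}p(v)=1$ for every $e\in E$; the set of such models is $\mathcal{G}(H)$, and for $W\subseteq V$ one writes $p(W)=\sum_{v\in W}p(v)$. For $W\subseteq V$, the induced sub-hypergraph is $H_W=(W,\{e\cap W: e\in E\})$. Two scenarios $H=(V,E)$, $H'=(V',E')$ are observationally equivalent if there is a bijection $\phi:V'\to V$ with $\mathcal{G}(H')=\{p\circ\phi: p\in\mathcal{G}(H)\}$. Virtual equivalence: a set $e\subseteq V$ is a virtual edge of $H$ if $\sum_{v\in e}p(v)=1$ for all $p\in\mathcal{G}(H)$; $H$ is virtually included in any $H'=(V,E\cup E')$ where $E'$ consists only of virtual edges of $H$; virtual equivalence is the symmetric closure of this relation. The completion $\overline{H}$ of $H$ is the virtually equivalent scenario with the most edges (i.e. with all virtual edges added). Equivalence by contraction: a nonempty $W\subseteq V$ can be contracted in $H$ if for every $e\in E$, either $W\subseteq e$ or $W\cap e=\emptyset$. For every nonempty $W'\subseteq W$, the induced sub-hypergraph $H_{V\setminus(W\setminus W')}$ is a contraction of $H$; equivalence by contraction is the symmetric transitive closure of this relation. Zero equivalence: for $W\subseteq V$, $H$ zero-reduces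 to $H_W$ if $p(v)=0$ for all $p\in\mathcal{G}(H)$ and all $v\in V\setminus W$ (the vertices of $V\setminus W$ are then called zero weighted); zero equivalence is the symmetric closure of zero-reduction. VCZ equivalence $\sim_{vcz}$ is the smallest equivalence relation containing virtual equivalence, equivalence by contraction and zero equivalence. For a scenario $H$, a choice of $H^{vcz}=(V^{vcz},E^{vcz})$ is a scenario obtained from $H$ by removing all zero weighted vertices, then contracting the remaining vertices so that $|V^{vcz}|$ is minimal, then taking the completion and removing edges (by virtual equivalence) so that $|E^{vcz}|$ is minimal. *)

theory Defs
  imports Complex_Main "HOL-Library.FuncSet"
begin

type_synonym 'a hypergraph = "'a set \<times> 'a set set"

definition verts :: "'a hypergraph \<Rightarrow> 'a set" where "verts H = fst H"
definition edges :: "'a hypergraph \<Rightarrow> 'a set set" where "edges H = snd H"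

definition scenario :: "'a hypergraph \<Rightarrow> bool" where
  "scenario H \<longleftrightarrow> finite (verts H) \<and> (\<forall>e\<in>edges H. e \<subseteq> verts H) \<and> verts H = \<Union>(edges H)"

definition models :: "'a hypergraph \<Rightarrow> ('a \<Rightarrow> real) set" where
  "models H = {p. p \<in> extensional (verts H) \<and> (\<forall>v\<in>verts H. 0 \<le> p v \<and> p v \<le> 1)
                 \<and> (\<forall>e\<in>edges H. (\<Sum>v\<in>e. p v) = 1)}"

definition obs_equiv :: "'a hypergraph \<Rightarrow> 'b hypergraph \<Rightarrow> bool" where
  "obs_equiv H H' \<longleftrightarrow> (\<exists>\<phi>. bij_betw \<phi> (verts H') (verts H) \<and>
      models H' = (\<lambda>p. restrict (p \<circ> \<phi>) (verts H')) ` models H)"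

definition induced :: "'a hypergraph \<Rightarrow> 'a set \<Rightarrow> 'a hypergraph" where
  "induced H W = (W, (\<lambda>e. e \<inter> W) ` edges H)"

definition virtual_edge :: "'a hypergraph \<Rightarrow> 'a set \<Rightarrow> bool" where
  "virtual_edge H e \<longleftrightarrow> e \<subseteq> verts H \<and> (\<forall>p\<in>models H. (\<Sum>v\<in>e. p v) = 1)"

definition virt_incl :: "'a hypergraph \<Rightarrow> 'a hypergraph \<Rightarrow> bool" where
  "virt_incl H H' \<longleftrightarrow> verts H' = verts H \<and> edges H \<subseteq> edges H' \<and>
      (\<forall>e\<in>edges H' - edges H. virtual_edge H e)"

definition completion :: "'a hypergraph \<Rightarrow> 'a hypergraph" where
  "completion H = (verts H, {e. virtual_edge H e})"

definition contractible :: "'a hypergraph \<Rightarrow> 'a set \<Rightarrow> bool" where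
  "contractible H W \<longleftrightarrow> W \<noteq> {} \<and> W \<subseteq> verts H \<and> (\<forall>e\<in>edges H. W \<subseteq> e \<or> W \<inter> e = {})"

definition contraction :: "'a hypergraph \<Rightarrow> 'a hypergraph \<Rightarrow> bool" where
  "contraction H H' \<longleftrightarrow> (\<exists>W W'. contractible H W \<and> W' \<subseteq> W \<and> W' \<noteq> {} \<and>
      H' = induced H (verts H - (W - W')))"

definition zero_reduces :: "'a hypergraph \<Rightarrow> 'a set \<Rightarrow> bool" where
  "zero_reduces H W \<longleftrightarrow> W \<subseteq> verts H \<and> (\<forall>p\<in>models H. \<forall>v\<in>verts H - W. p v = 0)"

inductive vcz_equiv :: "'a hypergraph \<Rightarrow> 'a hypergraph \<Rightarrow> bool" where
  vcz_refl: "scenario H \<Longrightarrow> vcz_equiv H H"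
| vcz_virt: "scenario H \<Longrightarrow> scenario H' \<Longrightarrow> virt_incl H H' \<Longrightarrow> vcz_equiv H H'"
| vcz_contr: "scenario H \<Longrightarrow> scenario H' \<Longrightarrow> contraction H H' \<Longrightarrow> vcz_equiv H H'"
| vcz_zero: "scenario H \<Longrightarrow> zero_reduces H W \<Longrightarrow> scenario (induced H W) \<Longrightarrow>
     vcz_equiv H (induced H W)"
| vcz_sym: "vcz_equiv H H' \<Longrightarrow> vcz_equiv H' H"
| vcz_trans: "vcz_equiv H H' \<Longrightarrow> vcz_equiv H' H'' \<Longrightarrow> vcz_equiv H H''"

definition remove_zero :: "'a hypergraph \<Rightarrow> 'a hypergraph" where
  "remove_zero H = induced H {v\<in>verts H. \<exists>p\<in>models H. p v \<noteq> 0}"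

definition is_vcz_choice :: "'a hypergraph \<Rightarrow> 'a hypergraph \<Rightarrow> bool" where
  "is_vcz_choice H K \<longleftrightarrow>
     (\<exists>Hc. contraction\<^sup>*\<^sup>* (remove_zero H) Hc \<and>
        (\<forall>H''. contraction\<^sup>*\<^sup>* (remove_zero H) H'' \<longrightarrow> card (verts Hc) \<le> card (verts H'')) \<and>
        verts K = verts Hc \<and> edges K \<subseteq> edges (completion Hc) \<and> scenario K \<and>
        virt_incl K (completion Hc) \<and>
        (\<forall>E''. E'' \<subseteq> edges (completion Hc) \<and> scenario (verts Hc, E'') \<and>
               virt_incl (verts Hc, E'') (completion Hc) \<longrightarrow> card (edges K) \<le> card E''))"

end

theory Submission
  imports Defs
begin

definition oeq :: "'a set \<times> ('a \<Rightarrow> real) set \<Rightarrow> 'b set \<times> ('b \<Rightarrow> real) set \<Rightarrow> bool" where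
  "oeq P Q \<longleftrightarrow> (\<exists>\<phi>. bij_betw \<phi> (fst Q) (fst P) \<and> snd Q = (\<lambda>p. restrict (p \<circ> \<phi>) (fst Q)) ` snd P)"

lemma obs_equiv_oeq: "obs_equiv K1 K2 \<longleftrightarrow> oeq (verts K1, models K1) (verts K2, models K2)"
  unfolding obs_equiv_def oeq_def by simp

lemma oeq_trans:
  assumes "oeq (A,M) (B,N)" "oeq (B,N) (C,L)" shows "oeq (A,M) (C,L)"
proof -
  obtain \<phi> where p: "bij_betw \<phi> B A" "N = (\<lambda>p. restrict (p \<circ> \<phi>) B) ` M" using assms(1) unfolding oeq_def by auto
  obtain \<chi> where c: "bij_betw \<chi> C B" "L = (\<lambda>p. restrict (p \<circ> \<chi>) C) ` N" using assms(2) unfolding oeq_def by auto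
  have "bij_betw (\<phi> \<circ> \<chi>) C A" using p c bij_betw_trans by blast
  moreover have "L = (\<lambda>p. restrict (p \<circ> (\<phi> \<circ> \<chi>)) C) ` M"
  proof -
    have "\<And>p. restrict (restrict (p \<circ> \<phi>) B \<circ> \<chi>) C = restrict (p \<circ> (\<phi> \<circ> \<chi>)) C"
      using c(1) unfolding bij_betw_def restrict_def by (auto simp: fun_eq_iff)
    then show ?thesis unfolding c(2) p(2) image_image by (intro image_cong[OF refl]) blast
  qed
  ultimately show ?thesis unfolding oeq_def by auto
qed

lemma oeq_sym:
  assumes "oeq (A,M) (B,N)" "M \<subseteq> extensional A" shows "oeq (B,N) (A,M)"
proof -
  obtain \<phi> where p: "bij_betw \<phi> B A" "N = (\<lambda>p. restrict (p \<circ> \<phi>) B) ` M" using assms(1) unfolding oeq_def by auto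
  define \<psi> where "\<psi> = inv_into B \<phi>"
  have b: "bij_betw \<psi> A B" using p(1) bij_betw_inv_into \<psi>_def by blast
  have k: "\<And>a. a \<in> A \<Longrightarrow> \<phi> (\<psi> a) = a" using p(1) unfolding \<psi>_def
    by (simp add: bij_betw_inv_into_right)
  have "\<And>p. p \<in> M \<Longrightarrow> restrict (restrict (p \<circ> \<phi>) B \<circ> \<psi>) A = p"
  proof -
    fix p assume "p \<in> M"
    then have "p \<in> extensional A" using assms(2) by auto
    then show "restrict (restrict (p \<circ> \<phi>) B \<circ> \<psi>) A = p"
      using k b unfolding bij_betw_def extensional_def restrict_def by (auto simp: fun_eq_iff)
  qed
  then have "M = (\<lambda>p. restrict (p \<circ> \<psi>) A) ` N" unfolding p(2) image_image by simp
  then show ?thesis using b unfolding oeq_def by auto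
qed

lemma oeq_refl: "M \<subseteq> extensional A \<Longrightarrow> oeq (A,M) (A,M)"
  unfolding oeq_def
  apply (rule exI[of _ id])
  apply (auto simp: image_def)
  apply (metis comp_id extensional_restrict subsetD)
  by (metis comp_id extensional_restrict subsetD)

definition Zs :: "'a hypergraph \<Rightarrow> 'a set" where
  "Zs H = {v\<in>verts H. \<exists>p\<in>models H. p v \<noteq> 0}"
definition eqv :: "'a hypergraph \<Rightarrow> 'a \<Rightarrow> 'a \<Rightarrow> bool" where
  "eqv H u v \<longleftrightarrow> (\<forall>e\<in>edges H. u \<in> e \<longleftrightarrow> v \<in> e)"
definition cls :: "'a hypergraph \<Rightarrow> 'a \<Rightarrow> 'a set" where
  "cls H v = {u\<in>Zs H. eqv H u v}"
definition Cs :: "'a hypergraph \<Rightarrow> 'a set set" where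
  "Cs H = cls H ` Zs H"
definition Ss :: "'a hypergraph \<Rightarrow> ('a set \<Rightarrow> real) set" where
  "Ss H = (\<lambda>p. restrict (\<lambda>X. \<Sum>x\<in>X. p x) (Cs H)) ` models H"
definition Inv :: "'a hypergraph \<Rightarrow> 'a set set \<times> ('a set \<Rightarrow> real) set" where
  "Inv H = (Cs H, Ss H)"

lemma Ss_ext: "Ss H \<subseteq> extensional (Cs H)"
  unfolding Ss_def by auto

lemma models_ext: "models H \<subseteq> extensional (verts H)"
  unfolding models_def by auto

lemma eqv_sym: "eqv H u v \<Longrightarrow> eqv H v u" unfolding eqv_def by auto
lemma eqv_trans: "eqv H u v \<Longrightarrow> eqv H v w \<Longrightarrow> eqv H u w" unfolding eqv_def by auto
lemma eqv_refl: "eqv H u u" unfolding eqv_def by auto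

lemma modelsD:
  assumes "p \<in> models H"
  shows "p \<in> extensional (verts H)" "\<And>v. v \<in> verts H \<Longrightarrow> 0 \<le> p v" "\<And>v. v \<in> verts H \<Longrightarrow> p v \<le> 1"
    "\<And>e. e \<in> edges H \<Longrightarrow> (\<Sum>v\<in>e. p v) = 1"
  using assms unfolding models_def by auto

lemma modelsI:
  assumes "p \<in> extensional (verts H)" "\<And>v. v \<in> verts H \<Longrightarrow> 0 \<le> p v" "\<And>v. v \<in> verts H \<Longrightarrow> p v \<le> 1"
    "\<And>e. e \<in> edges H \<Longrightarrow> (\<Sum>v\<in>e. p v) = 1"
  shows "p \<in> models H"
  using assms unfolding models_def by auto

lemma zero_off_Zs: "p \<in> models H \<Longrightarrow> v \<in> verts H \<Longrightarrow> v \<notin> Zs H \<Longrightarrow> p v = 0"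
  unfolding Zs_def by auto

lemma Zs_sub: "Zs H \<subseteq> verts H" unfolding Zs_def by auto

lemma verts_induced[simp]: "verts (induced H W) = W" unfolding induced_def verts_def by simp
lemma edges_induced[simp]: "edges (induced H W) = (\<lambda>e. e \<inter> W) ` edges H" unfolding induced_def edges_def by simp

lemma eqv_induced: "u \<in> W \<Longrightarrow> v \<in> W \<Longrightarrow> eqv (induced H W) u v \<longleftrightarrow> eqv H u v"
  unfolding eqv_def by auto

lemma Inv_zero:
  assumes sc: "scenario H" and W: "W \<subseteq> verts H" and z: "\<forall>p\<in>models H. \<forall>v\<in>verts H - W. p v = 0"
  shows "Inv (induced H W) = Inv H \<and> Zs (induced H W) = Zs H"
proof -
  let ?H = "induced H W"
  have fin: "finite (verts H)" and ev: "\<And>e. e \<in> edges H \<Longrightarrow> e \<subseteq> verts H" using sc unfolding scenario_def by auto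
  have m: "models ?H = (\<lambda>p. restrict p W) ` models H"
  proof
    show "(\<lambda>p. restrict p W) ` models H \<subseteq> models ?H"
    proof
      fix q assume "q \<in> (\<lambda>p. restrict p W) ` models H"
      then obtain p where p: "p \<in> models H" and q: "q = restrict p W" by auto
      show "q \<in> models ?H"
      proof (rule modelsI)
        show "q \<in> extensional (verts ?H)" using q by simp
        show "0 \<le> q v" if "v \<in> verts ?H" for v using that p W q modelsD(2)[OF p] by auto
        show "q v \<le> 1" if "v \<in> verts ?H" for v using that p W q modelsD(3)[OF p] by auto
        show "(\<Sum>v\<in>e. q v) = 1" if eH: "e \<in> edges ?H" for e
        proof -
          obtain e0 where e0: "e0 \<in> edges H" "e = e0 \<inter> W" using eH unfolding edges_induced by blast
          have f: "finite e0" using ev[OF e0(1)] fin finite_subset by blast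
          have "(\<Sum>v\<in>e0. p v) = (\<Sum>v\<in>e0 \<inter> W. p v) + (\<Sum>v\<in>e0 - W. p v)"
            by (rule sum.Int_Diff[OF f])
          also have "(\<Sum>v\<in>e0 - W. p v) = 0" using z p ev[OF e0(1)] by (intro sum.neutral) auto
          finally have "(\<Sum>v\<in>e0 \<inter> W. p v) = 1" using modelsD(4)[OF p e0(1)] by simp
          then show ?thesis using e0 q by simp
        qed
      qed
    qed
    show "models ?H \<subseteq> (\<lambda>p. restrict p W) ` models H"
    proof
      fix q assume q: "q \<in> models ?H"
      define p where "p = restrict (\<lambda>v. if v \<in> W then q v else 0) (verts H)"
      have "p \<in> models H"
      proof (rule modelsI)
        show "p \<in> extensional (verts H)" unfolding p_def by simp
        show "0 \<le> p v" if "v \<in> verts H" for v using that modelsD(2)[OF q] unfolding p_def by auto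
        show "p v \<le> 1" if "v \<in> verts H" for v using that modelsD(3)[OF q] unfolding p_def by auto
        show "(\<Sum>v\<in>e. p v) = 1" if "e \<in> edges H" for e
        proof -
          have f: "finite e" using ev[OF that] fin finite_subset by blast
          have "(\<Sum>v\<in>e. p v) = (\<Sum>v\<in>e \<inter> W. p v) + (\<Sum>v\<in>e - W. p v)"
            by (rule sum.Int_Diff[OF f])
          also have "(\<Sum>v\<in>e - W. p v) = 0" using ev[OF that] unfolding p_def by (intro sum.neutral) auto
          also have "(\<Sum>v\<in>e \<inter> W. p v) = (\<Sum>v\<in>e \<inter> W. q v)"
            using ev[OF that] unfolding p_def by (intro sum.cong) auto
          also have "\<dots> = 1" using modelsD(4)[OF q] that by simp
          finally show ?thesis by simp
        qed
      qed
      moreover have "q = restrict p W"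
        using modelsD(1)[OF q] W unfolding p_def extensional_def by (auto simp: fun_eq_iff)
      ultimately show "q \<in> (\<lambda>p. restrict p W) ` models H" by auto
    qed
  qed
  have ZW: "Zs H \<subseteq> W"
    using z unfolding Zs_def by auto
  have Z: "Zs ?H = Zs H"
  proof
    show "Zs ?H \<subseteq> Zs H" unfolding Zs_def m using W by auto
    show "Zs H \<subseteq> Zs ?H"
    proof
      fix v assume v: "v \<in> Zs H"
      then obtain p where "p \<in> models H" "p v \<noteq> 0" unfolding Zs_def by auto
      then show "v \<in> Zs ?H" using v ZW unfolding Zs_def m by force
    qed
  qed
  have c: "cls ?H v = cls H v" if "v \<in> Zs H" for v
    unfolding cls_def Z using eqv_induced[of _ W v H] ZW that by auto
  have C: "Cs ?H = Cs H" unfolding Cs_def Z using c by auto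
  have S: "Ss ?H = Ss H"
  proof -
    have "\<And>p. restrict (\<lambda>X. \<Sum>x\<in>X. restrict p W x) (Cs H) = restrict (\<lambda>X. \<Sum>x\<in>X. p x) (Cs H)"
    proof -
      fix p
      have "\<And>X. X \<in> Cs H \<Longrightarrow> X \<subseteq> W" unfolding Cs_def cls_def using ZW by auto
      then show "restrict (\<lambda>X. \<Sum>x\<in>X. restrict p W x) (Cs H) = restrict (\<lambda>X. \<Sum>x\<in>X. p x) (Cs H)"
        by (intro restrict_ext sum.cong) auto
    qed
    then show ?thesis unfolding Ss_def C m image_image by (intro image_cong[OF refl]) blast
  qed
  show ?thesis unfolding Inv_def C S using Z by simp
qed


lemma scenarioD:
  assumes "scenario H"
  shows "finite (verts H)" "\<And>e. e \<in> edges H \<Longrightarrow> e \<subseteq> verts H" "verts H = \<Union>(edges H)"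
  using assms unfolding scenario_def by auto

lemma edge_finite: "scenario H \<Longrightarrow> e \<in> edges H \<Longrightarrow> finite e"
  using scenarioD finite_subset by metis

lemma sum_le_edge:
  assumes sc: "scenario H" and p: "p \<in> models H" and e: "e \<in> edges H" and X: "X \<subseteq> e"
  shows "(\<Sum>x\<in>X. p x) \<le> 1"
proof -
  have "(\<Sum>x\<in>X. p x) \<le> (\<Sum>x\<in>e. p x)"
    using edge_finite[OF sc e] X scenarioD(2)[OF sc e] modelsD(2)[OF p]
    by (intro sum_mono2) auto
  then show ?thesis using modelsD(4)[OF p e] by simp
qed

definition mv :: "('a \<Rightarrow> real) \<Rightarrow> 'a \<Rightarrow> 'a \<Rightarrow> 'a \<Rightarrow> real" where
  "mv p u v = (\<lambda>x. if x = u then 0 else if x = v then p v + p u else p x)"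

lemma sum_mv_both:
  assumes "finite e" "u \<noteq> v" "u \<in> e" "v \<in> e"
  shows "(\<Sum>x\<in>e. mv p u v x) = (\<Sum>x\<in>e. p x)"
proof -
  have "(\<Sum>x\<in>e. mv p u v x) = mv p u v u + mv p u v v + (\<Sum>x\<in>e - {u} - {v}. mv p u v x)"
    using assms by (simp add: sum.remove[of e u] sum.remove[of "e - {u}" v])
  also have "(\<Sum>x\<in>e - {u} - {v}. mv p u v x) = (\<Sum>x\<in>e - {u} - {v}. p x)"
    unfolding mv_def by (intro sum.cong) auto
  also have "mv p u v u + mv p u v v = p u + p v" using assms unfolding mv_def by simp
  also have "p u + p v + (\<Sum>x\<in>e - {u} - {v}. p x) = (\<Sum>x\<in>e. p x)"
    using assms by (simp add: sum.remove[of e u] sum.remove[of "e - {u}" v])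
  finally show ?thesis .
qed

lemma sum_mv_none:
  assumes "u \<notin> e" "v \<notin> e"
  shows "(\<Sum>x\<in>e. mv p u v x) = (\<Sum>x\<in>e. p x)"
  using assms unfolding mv_def by (intro sum.cong) auto

lemma sum_mv_u:
  assumes "finite e" "u \<in> e" "v \<notin> e"
  shows "(\<Sum>x\<in>e. mv p u v x) = (\<Sum>x\<in>e. p x) - p u"
proof -
  have "(\<Sum>x\<in>e. mv p u v x) = mv p u v u + (\<Sum>x\<in>e - {u}. mv p u v x)"
    using assms by (simp add: sum.remove[of e u])
  also have "(\<Sum>x\<in>e - {u}. mv p u v x) = (\<Sum>x\<in>e - {u}. p x)"
    using assms unfolding mv_def by (intro sum.cong) auto
  also have "(\<Sum>x\<in>e. p x) = p u + (\<Sum>x\<in>e - {u}. p x)"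
    using assms by (simp add: sum.remove[of e u])
  ultimately show ?thesis unfolding mv_def by simp
qed

lemma mv_model:
  assumes sc: "scenario H" and p: "p \<in> models H" and u: "u \<in> verts H" and v: "v \<in> verts H"
    and uv: "u \<noteq> v" and eq: "eqv H u v"
  shows "mv p u v \<in> models H"
proof (rule modelsI)
  show "mv p u v \<in> extensional (verts H)" using modelsD(1)[OF p] u v unfolding mv_def extensional_def by auto
  show "0 \<le> mv p u v x" if "x \<in> verts H" for x using that modelsD(2)[OF p] u v unfolding mv_def by auto
  obtain e0 where e0: "e0 \<in> edges H" "u \<in> e0" using u scenarioD(3)[OF sc] by auto
  have "v \<in> e0" using eq e0 unfolding eqv_def by auto
  then have "(\<Sum>x\<in>{u,v}. p x) \<le> 1" using sum_le_edge[OF sc p e0(1)] e0 by auto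
  then have "p u + p v \<le> 1" using uv by simp
  then show "mv p u v x \<le> 1" if "x \<in> verts H" for x using that modelsD(3)[OF p] unfolding mv_def by auto
  show "(\<Sum>x\<in>e. mv p u v x) = 1" if e: "e \<in> edges H" for e
  proof (cases "u \<in> e")
    case True
    then have "v \<in> e" using eq e unfolding eqv_def by auto
    then show ?thesis using sum_mv_both[OF edge_finite[OF sc e] uv True] modelsD(4)[OF p e] by simp
  next
    case False
    then have "v \<notin> e" using eq e unfolding eqv_def by auto
    then show ?thesis using sum_mv_none[OF False] modelsD(4)[OF p e] by simp
  qed
qed

lemma virtual_split:
  assumes sc: "scenario H" and u: "u \<in> Zs H" and v: "v \<in> verts H" and eq: "eqv H u v"
    and ve: "virtual_edge H e" and ue: "u \<in> e"
  shows "v \<in> e"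
proof (rule ccontr)
  assume ve': "v \<notin> e"
  then have uv: "u \<noteq> v" using ue by auto
  obtain p where p: "p \<in> models H" "p u \<noteq> 0" using u unfolding Zs_def by auto
  have uV: "u \<in> verts H" using u Zs_sub[of H] by auto
  have m: "mv p u v \<in> models H" using mv_model[OF sc p(1) uV v uv eq] .
  have fe: "finite e" using ve scenarioD(1)[OF sc] finite_subset unfolding virtual_edge_def by auto
  have "(\<Sum>x\<in>e. mv p u v x) = (\<Sum>x\<in>e. p x) - p u" using sum_mv_u[OF fe ue ve'] .
  moreover have "(\<Sum>x\<in>e. mv p u v x) = 1" "(\<Sum>x\<in>e. p x) = 1" using ve m p(1) unfolding virtual_edge_def by auto
  ultimately show False using p(2) by simp
qed

lemma Inv_virt:
  assumes sc: "scenario H" and vi: "virt_incl H H'"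
  shows "Inv H' = Inv H"
proof -
  have V: "verts H' = verts H" and E: "edges H \<subseteq> edges H'"
    and VE: "\<And>e. e \<in> edges H' - edges H \<Longrightarrow> virtual_edge H e"
    using vi unfolding virt_incl_def by auto
  have m: "models H' = models H"
  proof
    show "models H' \<subseteq> models H" using E V unfolding models_def by auto
    show "models H \<subseteq> models H'"
    proof
      fix p assume p: "p \<in> models H"
      show "p \<in> models H'"
      proof (rule modelsI)
        show "p \<in> extensional (verts H')" using modelsD(1)[OF p] V by simp
        show "0 \<le> p v" "p v \<le> 1" if "v \<in> verts H'" for v using that V modelsD(2,3)[OF p] by auto
        show "(\<Sum>v\<in>e. p v) = 1" if "e \<in> edges H'" for e
          using that VE[of e] modelsD(4)[OF p] p unfolding virtual_edge_def by blast
      qed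
    qed
  qed
  have Z: "Zs H' = Zs H" unfolding Zs_def m V ..
  have eq: "eqv H' u v \<longleftrightarrow> eqv H u v" if u: "u \<in> Zs H" and v: "v \<in> Zs H" for u v
  proof
    show "eqv H' u v \<Longrightarrow> eqv H u v" using E unfolding eqv_def by auto
    assume h: "eqv H u v"
    have uV: "u \<in> verts H" and vV: "v \<in> verts H" using u v Zs_sub[of H] by auto
    show "eqv H' u v" unfolding eqv_def
    proof
      fix e assume e: "e \<in> edges H'"
      show "u \<in> e \<longleftrightarrow> v \<in> e"
      proof (cases "e \<in> edges H")
        case True then show ?thesis using h unfolding eqv_def by auto
      next
        case False
        then have ve: "virtual_edge H e" using VE e by auto
        show ?thesis using virtual_split[OF sc u vV h ve] virtual_split[OF sc v uV eqv_sym[OF h] ve] by blast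
      qed
    qed
  qed
  have c: "cls H' v = cls H v" if "v \<in> Zs H" for v
    unfolding cls_def Z using eq that by auto
  have C: "Cs H' = Cs H" unfolding Cs_def Z using c by auto
  show ?thesis unfolding Inv_def Ss_def C m ..
qed


lemma sum_Zs:
  assumes sc: "scenario H" and p: "p \<in> models H" and X: "X \<subseteq> verts H"
  shows "(\<Sum>x\<in>X \<inter> Zs H. p x) = (\<Sum>x\<in>X. p x)"
proof -
  have "finite X" using X scenarioD(1)[OF sc] finite_subset by blast
  then show ?thesis using zero_off_Zs[OF p] X by (intro sum.mono_neutral_left) auto
qed

lemma cls_alt: "cls H y = {u\<in>verts H. eqv H u y} \<inter> Zs H"
  unfolding cls_def using Zs_sub[of H] by auto

lemma sum_cls:
  assumes sc: "scenario H" and p: "p \<in> models H"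
  shows "(\<Sum>x\<in>cls H y. p x) = (\<Sum>x\<in>{u\<in>verts H. eqv H u y}. p x)"
  unfolding cls_alt by (rule sum_Zs[OF sc p]) auto

lemma ext_model:
  assumes sc: "scenario H" and W: "W \<subseteq> verts H" and q: "q \<in> models (induced H W)"
  shows "restrict (\<lambda>v. if v \<in> W then q v else 0) (verts H) \<in> models H"
proof -
  define p where "p = restrict (\<lambda>v. if v \<in> W then q v else 0) (verts H)"
  have ev: "\<And>e. e \<in> edges H \<Longrightarrow> e \<subseteq> verts H" using scenarioD(2)[OF sc] .
  have "p \<in> models H"
  proof (rule modelsI)
    show "p \<in> extensional (verts H)" unfolding p_def by simp
    show "0 \<le> p v" if "v \<in> verts H" for v using that modelsD(2)[OF q] unfolding p_def by auto
    show "p v \<le> 1" if "v \<in> verts H" for v using that modelsD(3)[OF q] unfolding p_def by auto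
    show "(\<Sum>v\<in>e. p v) = 1" if "e \<in> edges H" for e
    proof -
      have f: "finite e" using edge_finite[OF sc that] .
      have "(\<Sum>v\<in>e. p v) = (\<Sum>v\<in>e \<inter> W. p v) + (\<Sum>v\<in>e - W. p v)"
        by (rule sum.Int_Diff[OF f])
      also have "(\<Sum>v\<in>e - W. p v) = 0" using ev[OF that] unfolding p_def by (intro sum.neutral) auto
      also have "(\<Sum>v\<in>e \<inter> W. p v) = (\<Sum>v\<in>e \<inter> W. q v)"
        using ev[OF that] unfolding p_def by (intro sum.cong) auto
      also have "\<dots> = 1" using modelsD(4)[OF q] that by simp
      finally show ?thesis by simp
    qed
  qed
  then show ?thesis unfolding p_def .
qed

locale csetup =
  fixes H :: "'a hypergraph" and W W' :: "'a set"
  assumes sc: "scenario H" and ct: "contractible H W" and W'W: "W' \<subseteq> W" and W'ne: "W' \<noteq> {}"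
begin

abbreviation "V' \<equiv> verts H - (W - W')"
abbreviation "H' \<equiv> induced H V'"

definition mvW :: "'a \<Rightarrow> ('a \<Rightarrow> real) \<Rightarrow> 'a \<Rightarrow> real" where
  "mvW w p = restrict (\<lambda>x. if x \<in> W then (if x = w then (\<Sum>y\<in>W. p y) else 0) else p x) V'"

definition ext :: "('a \<Rightarrow> real) \<Rightarrow> 'a \<Rightarrow> real" where
  "ext q = restrict (\<lambda>v. if v \<in> V' then q v else 0) (verts H)"

lemma WV: "W \<subseteq> verts H" using ct unfolding contractible_def by auto
lemma Wne: "W \<noteq> {}" using ct unfolding contractible_def by auto
lemma Wedge: "e \<in> edges H \<Longrightarrow> W \<subseteq> e \<or> W \<inter> e = {}" using ct unfolding contractible_def by auto
lemma W_eqv: "u \<in> W \<Longrightarrow> v \<in> W \<Longrightarrow> eqv H u v"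
  unfolding eqv_def using Wedge by blast
lemma finW: "finite W" using WV scenarioD(1)[OF sc] finite_subset by blast

lemma ext_model': "q \<in> models H' \<Longrightarrow> ext q \<in> models H"
  unfolding ext_def by (rule ext_model[OF sc]) auto

lemma sumW_le: assumes p: "p \<in> models H" shows "(\<Sum>y\<in>W. p y) \<le> 1"
proof -
  obtain w where w: "w \<in> W" using Wne by auto
  then obtain e0 where e0: "e0 \<in> edges H" "w \<in> e0" using WV scenarioD(3)[OF sc] by auto
  then have "W \<subseteq> e0" using Wedge w by auto
  then show ?thesis using sum_le_edge[OF sc p e0(1)] by simp
qed

lemma sumW_nonneg: assumes p: "p \<in> models H" shows "0 \<le> (\<Sum>y\<in>W. p y)"
  using modelsD(2)[OF p] WV by (intro sum_nonneg) auto

lemma mvW_model: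
  assumes p: "p \<in> models H" and w: "w \<in> W'"
  shows "mvW w p \<in> models H'"
proof (rule modelsI)
  show "mvW w p \<in> extensional (verts H')" unfolding mvW_def by simp
  show "0 \<le> mvW w p v" if "v \<in> verts H'" for v
    using that modelsD(2)[OF p] sumW_nonneg[OF p] unfolding mvW_def by auto
  show "mvW w p v \<le> 1" if "v \<in> verts H'" for v
    using that modelsD(3)[OF p] sumW_le[OF p] unfolding mvW_def by auto
  show "(\<Sum>v\<in>e. mvW w p v) = 1" if eH: "e \<in> edges H'" for e
  proof -
    obtain e0 where e0: "e0 \<in> edges H" "e = e0 \<inter> V'" using eH unfolding edges_induced by blast
    have fe0: "finite e0" using edge_finite[OF sc e0(1)] .
    have e0V: "e0 \<subseteq> verts H" using scenarioD(2)[OF sc e0(1)] .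
    show ?thesis
    proof (cases "W \<subseteq> e0")
      case True
      have ed: "e = (e0 - W) \<union> W'" unfolding e0(2) using True W'W e0V by blast
      have "(\<Sum>v\<in>e. mvW w p v) = (\<Sum>v\<in>e0 - W. mvW w p v) + (\<Sum>v\<in>W'. mvW w p v)"
        unfolding ed by (rule sum.union_disjoint) (use fe0 finite_subset[OF W'W finW] W'W in auto)
      also have "(\<Sum>v\<in>e0 - W. mvW w p v) = (\<Sum>v\<in>e0 - W. p v)"
        unfolding mvW_def using e0V by (intro sum.cong) auto
      also have "(\<Sum>v\<in>W'. mvW w p v) = (\<Sum>v\<in>W'. if v = w then (\<Sum>y\<in>W. p y) else 0)"
        unfolding mvW_def using W'W WV by (intro sum.cong) auto
      also have "\<dots> = (\<Sum>y\<in>W. p y)"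
        using w finite_subset[OF W'W finW] by (simp add: sum.delta)
      also have "(\<Sum>v\<in>e0 - W. p v) + (\<Sum>y\<in>W. p y) = (\<Sum>v\<in>e0. p v)"
        using sum.subset_diff[OF True fe0, of p] by simp
      also have "\<dots> = 1" using modelsD(4)[OF p e0(1)] .
      finally show ?thesis .
    next
      case False
      then have dis: "W \<inter> e0 = {}" using Wedge[OF e0(1)] by auto
      then have "e = e0" unfolding e0(2) using dis e0V by blast
      then have "(\<Sum>v\<in>e. mvW w p v) = (\<Sum>v\<in>e0. p v)"
        unfolding mvW_def using dis e0V by (intro sum.cong) auto
      then show ?thesis using modelsD(4)[OF p e0(1)] by simp
    qed
  qed
qed

lemma sum_mvW:
  assumes p: "p \<in> models H" and w: "w \<in> W'"
  shows "(\<Sum>x\<in>{u\<in>V'. eqv H u y}. mvW w p x) = (\<Sum>x\<in>{u\<in>verts H. eqv H u y}. p x)"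
proof -
  let ?T = "{u\<in>verts H. eqv H u y}"
  have fT: "finite ?T" using scenarioD(1)[OF sc] by simp
  show ?thesis
  proof (cases "W \<inter> ?T = {}")
    case True
    have "{u\<in>V'. eqv H u y} = ?T" using True W'W by auto
    moreover have "(\<Sum>x\<in>?T. mvW w p x) = (\<Sum>x\<in>?T. p x)"
      unfolding mvW_def using True W'W by (intro sum.cong) auto
    ultimately show ?thesis by simp
  next
    case False
    then obtain z where z: "z \<in> W" "eqv H z y" by auto
    have WT: "W \<subseteq> ?T"
    proof
      fix u assume u: "u \<in> W"
      then show "u \<in> ?T" using WV eqv_trans[OF W_eqv[OF u z(1)] z(2)] by auto
    qed
    have ed: "{u\<in>V'. eqv H u y} = (?T - W) \<union> W'" using WT W'W by auto
    have "(\<Sum>x\<in>{u\<in>V'. eqv H u y}. mvW w p x) = (\<Sum>v\<in>?T - W. mvW w p v) + (\<Sum>v\<in>W'. mvW w p v)"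
      unfolding ed by (rule sum.union_disjoint) (use fT finite_subset[OF W'W finW] W'W in auto)
    also have "(\<Sum>v\<in>?T - W. mvW w p v) = (\<Sum>v\<in>?T - W. p v)"
      unfolding mvW_def by (intro sum.cong) auto
    also have "(\<Sum>v\<in>W'. mvW w p v) = (\<Sum>v\<in>W'. if v = w then (\<Sum>y\<in>W. p y) else 0)"
      unfolding mvW_def using W'W WV by (intro sum.cong) auto
    also have "\<dots> = (\<Sum>y\<in>W. p y)"
      using w finite_subset[OF W'W finW] by (simp add: sum.delta)
    also have "(\<Sum>v\<in>?T - W. p v) + (\<Sum>y\<in>W. p y) = (\<Sum>v\<in>?T. p v)"
      using sum.subset_diff[OF WT fT, of p] by simp
    finally show ?thesis .
  qed
qed

lemma sum_ext:
  assumes q: "q \<in> models H'"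
  shows "(\<Sum>x\<in>{u\<in>verts H. eqv H u y}. ext q x) = (\<Sum>x\<in>{u\<in>V'. eqv H u y}. q x)"
proof -
  let ?T = "{u\<in>verts H. eqv H u y}"
  have fT: "finite ?T" using scenarioD(1)[OF sc] by simp
  have "(\<Sum>x\<in>?T. ext q x) = (\<Sum>x\<in>{u\<in>V'. eqv H u y}. ext q x)"
    using fT unfolding ext_def by (intro sum.mono_neutral_right) auto
  also have "\<dots> = (\<Sum>x\<in>{u\<in>V'. eqv H u y}. q x)"
    unfolding ext_def by (intro sum.cong) auto
  finally show ?thesis .
qed


lemma V'sub: "V' \<subseteq> verts H" by auto

lemma scH': "scenario H'"
  unfolding scenario_def verts_induced edges_induced
proof (intro conjI)
  show "finite V'" using scenarioD(1)[OF sc] by auto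
  show "\<forall>e\<in>(\<lambda>e. e \<inter> V') ` edges H. e \<subseteq> V'" by auto
  show "V' = \<Union> ((\<lambda>e. e \<inter> V') ` edges H)" using scenarioD(3)[OF sc] by auto
qed

lemma w0ex: obtains w0 where "w0 \<in> W'" using W'ne by auto

lemma Zs'_out: assumes "v \<in> V'" "v \<notin> W" shows "v \<in> Zs H' \<longleftrightarrow> v \<in> Zs H"
proof
  assume "v \<in> Zs H'"
  then obtain q where q: "q \<in> models H'" "q v \<noteq> 0" unfolding Zs_def by auto
  have "ext q v = q v" using assms unfolding ext_def by auto
  then have "ext q v \<noteq> 0" using q(2) by simp
  then show "v \<in> Zs H" using ext_model'[OF q(1)] assms unfolding Zs_def by blast
next
  assume "v \<in> Zs H"
  then obtain p where p: "p \<in> models H" "p v \<noteq> 0" unfolding Zs_def by auto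
  obtain w0 where w0: "w0 \<in> W'" using w0ex by blast
  have "mvW w0 p v = p v" using assms unfolding mvW_def by auto
  then have "mvW w0 p v \<noteq> 0" using p(2) by simp
  then show "v \<in> Zs H'" using mvW_model[OF p(1) w0] assms unfolding Zs_def verts_induced by blast
qed

lemma Zs'_in: assumes v: "v \<in> W'" shows "v \<in> Zs H' \<longleftrightarrow> W \<inter> Zs H \<noteq> {}"
proof
  assume "v \<in> Zs H'"
  then obtain q where q: "q \<in> models H'" "q v \<noteq> 0" unfolding Zs_def by auto
  have vV: "v \<in> V'" "v \<in> verts H" using v W'W WV by auto
  have "ext q v = q v" using vV unfolding ext_def by auto
  then have "ext q v \<noteq> 0" using q(2) by simp
  then have "v \<in> Zs H" using ext_model'[OF q(1)] vV unfolding Zs_def by blast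
  then show "W \<inter> Zs H \<noteq> {}" using v W'W by auto
next
  assume "W \<inter> Zs H \<noteq> {}"
  then obtain w p where w: "w \<in> W" and p: "p \<in> models H" "p w \<noteq> 0" unfolding Zs_def by auto
  have "p w \<le> (\<Sum>y\<in>W. p y)"
    using w finW modelsD(2)[OF p(1)] WV by (intro member_le_sum) auto
  moreover have "0 \<le> p w" using modelsD(2)[OF p(1)] w WV by auto
  ultimately have pos: "(\<Sum>y\<in>W. p y) \<noteq> 0" using p(2) by linarith
  have vV: "v \<in> V'" "v \<in> W" using v W'W WV by auto
  have "mvW v p v = (\<Sum>y\<in>W. p y)" using vV unfolding mvW_def by auto
  then have "mvW v p v \<noteq> 0" using pos by simp
  then show "v \<in> Zs H'" using mvW_model[OF p(1) v] vV unfolding Zs_def verts_induced by blast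
qed

lemma allZ: assumes "Zs H = verts H" shows "Zs H' = verts H'"
proof
  show "Zs H' \<subseteq> verts H'" by (rule Zs_sub)
  show "verts H' \<subseteq> Zs H'"
  proof
    fix v assume v: "v \<in> verts H'"
    show "v \<in> Zs H'"
    proof (cases "v \<in> W")
      case True
      then have "v \<in> W'" using v by auto
      then show ?thesis using Zs'_in assms WV Wne by auto
    next
      case False
      then show ?thesis using Zs'_out[of v] v assms by auto
    qed
  qed
qed

lemma eqv': "u \<in> V' \<Longrightarrow> v \<in> V' \<Longrightarrow> eqv H' u v \<longleftrightarrow> eqv H u v"
  by (rule eqv_induced)

lemma cls_cong: assumes "eqv K a b" shows "cls K a = cls K b"
  unfolding cls_def using eqv_trans[OF _ assms] eqv_trans[OF _ eqv_sym[OF assms]] by blast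

definition phi :: "'a set \<Rightarrow> 'a set" where
  "phi Y = {u\<in>Zs H. \<exists>y\<in>Y. eqv H u y}"

lemma ZsV': "Zs H' \<subseteq> V'" using Zs_sub[of H'] by simp

lemma phi_cls: assumes y: "y \<in> Zs H'" shows "phi (cls H' y) = cls H y"
proof
  have yV: "y \<in> V'" using y ZsV' by auto
  show "phi (cls H' y) \<subseteq> cls H y"
  proof
    fix u assume "u \<in> phi (cls H' y)"
    then obtain y' where u: "u \<in> Zs H" "y' \<in> cls H' y" "eqv H u y'" unfolding phi_def by auto
    then have "y' \<in> V'" "eqv H' y' y" unfolding cls_def using ZsV' by auto
    then have "eqv H y' y" using eqv' yV by auto
    then have "eqv H u y" by (rule eqv_trans[OF u(3)])
    then show "u \<in> cls H y" using u(1) unfolding cls_def by blast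
  qed
  show "cls H y \<subseteq> phi (cls H' y)"
  proof
    fix u assume "u \<in> cls H y"
    moreover have "y \<in> cls H' y" using y eqv_refl[of H' y] unfolding cls_def by auto
    ultimately show "u \<in> phi (cls H' y)" unfolding phi_def cls_def by auto
  qed
qed

lemma witness: assumes y: "y \<in> Zs H'" shows "\<exists>z\<in>Zs H. eqv H z y"
proof (cases "y \<in> Zs H")
  case True then show ?thesis using eqv_refl[of H y] by blast
next
  case False
  have yV: "y \<in> V'" using y ZsV' by auto
  then have yW: "y \<in> W'" "y \<in> W" using Zs'_out[of y] y False by auto
  then obtain w where "w \<in> W \<inter> Zs H" using Zs'_in y by auto
  then show ?thesis using W_eqv[of w y] yW by auto
qed

lemma cls_in: assumes y: "y \<in> Zs H'" shows "cls H y \<in> Cs H"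
proof -
  obtain z where z: "z \<in> Zs H" "eqv H z y" using witness[OF y] by auto
  then have "cls H y = cls H z" using cls_cong[OF eqv_sym[OF z(2)]] by simp
  then show ?thesis using z unfolding Cs_def by auto
qed

lemma phi_bij: "bij_betw phi (Cs H') (Cs H)"
proof (rule bij_betw_imageI)
  show "inj_on phi (Cs H')"
  proof (rule inj_onI)
    fix Y1 Y2 assume "Y1 \<in> Cs H'" "Y2 \<in> Cs H'" and eq: "phi Y1 = phi Y2"
    then obtain y1 y2 where y: "y1 \<in> Zs H'" "y2 \<in> Zs H'" "Y1 = cls H' y1" "Y2 = cls H' y2"
      unfolding Cs_def by auto
    then have c: "cls H y1 = cls H y2" using eq phi_cls by auto
    obtain z where z: "z \<in> Zs H" "eqv H z y1" using witness[OF y(1)] by auto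
    then have "z \<in> cls H y2" using c unfolding cls_def by auto
    then have "eqv H z y2" unfolding cls_def by auto
    then have "eqv H y1 y2" by (rule eqv_trans[OF eqv_sym[OF z(2)]])
    then have "eqv H' y1 y2" using eqv' y ZsV' by auto
    then show "Y1 = Y2" using y cls_cong[of H' y1 y2] by simp
  qed
  show "phi ` Cs H' = Cs H"
  proof
    show "phi ` Cs H' \<subseteq> Cs H" using phi_cls cls_in unfolding Cs_def[of H'] by auto
    show "Cs H \<subseteq> phi ` Cs H'"
    proof
      fix X assume "X \<in> Cs H"
      then obtain x where x: "x \<in> Zs H" "X = cls H x" unfolding Cs_def by auto
      have xV: "x \<in> verts H" using x Zs_sub[of H] by auto
      show "X \<in> phi ` Cs H'"
      proof (cases "x \<in> W")
        case False
        then have "x \<in> Zs H'" using Zs'_out[of x] x xV by auto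
        then show ?thesis using phi_cls x unfolding Cs_def by force
      next
        case True
        obtain w0 where w0: "w0 \<in> W'" using w0ex by blast
        then have z0: "w0 \<in> Zs H'" using Zs'_in True x by auto
        have "eqv H w0 x" using W_eqv w0 W'W True by auto
        then have "cls H w0 = cls H x" by (rule cls_cong)
        then show ?thesis using phi_cls[OF z0] z0 x unfolding Cs_def by force
      qed
    qed
  qed
qed

lemma sum_phi_mvW:
  assumes p: "p \<in> models H" and w: "w \<in> W'" and y: "y \<in> Zs H'"
  shows "(\<Sum>x\<in>phi (cls H' y). p x) = (\<Sum>x\<in>cls H' y. mvW w p x)"
proof -
  have yV: "y \<in> V'" using y ZsV' by auto
  have "(\<Sum>x\<in>phi (cls H' y). p x) = (\<Sum>x\<in>{u\<in>verts H. eqv H u y}. p x)"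
    using phi_cls[OF y] sum_cls[OF sc p] by simp
  also have "\<dots> = (\<Sum>x\<in>{u\<in>V'. eqv H u y}. mvW w p x)" using sum_mvW[OF p w] by simp
  also have "{u\<in>V'. eqv H u y} = {u\<in>verts H'. eqv H' u y}" using eqv' yV by auto
  also have "(\<Sum>x\<in>{u\<in>verts H'. eqv H' u y}. mvW w p x) = (\<Sum>x\<in>cls H' y. mvW w p x)"
    using sum_cls[OF scH' mvW_model[OF p w]] by simp
  finally show ?thesis .
qed

lemma sum_phi_ext:
  assumes q: "q \<in> models H'" and y: "y \<in> Zs H'"
  shows "(\<Sum>x\<in>phi (cls H' y). ext q x) = (\<Sum>x\<in>cls H' y. q x)"
proof -
  have yV: "y \<in> V'" using y ZsV' by auto
  have "(\<Sum>x\<in>phi (cls H' y). ext q x) = (\<Sum>x\<in>{u\<in>verts H. eqv H u y}. ext q x)"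
    using phi_cls[OF y] sum_cls[OF sc ext_model'[OF q]] by simp
  also have "\<dots> = (\<Sum>x\<in>{u\<in>V'. eqv H u y}. q x)" using sum_ext[OF q] by simp
  also have "{u\<in>V'. eqv H u y} = {u\<in>verts H'. eqv H' u y}" using eqv' yV by auto
  also have "(\<Sum>x\<in>{u\<in>verts H'. eqv H' u y}. q x) = (\<Sum>x\<in>cls H' y. q x)"
    using sum_cls[OF scH' q] by simp
  finally show ?thesis .
qed

lemma Inv_contr: "oeq (Inv H) (Inv H')"
proof -
  obtain w0 where w0: "w0 \<in> W'" using w0ex by blast
  let ?F = "\<lambda>f. restrict (f \<circ> phi) (Cs H')"
  have "Ss H' = ?F ` Ss H"
  proof
    show "?F ` Ss H \<subseteq> Ss H'"
    proof
      fix g assume "g \<in> ?F ` Ss H"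
      then obtain p where p: "p \<in> models H" and g: "g = ?F (restrict (\<lambda>X. \<Sum>x\<in>X. p x) (Cs H))"
        unfolding Ss_def by auto
      have "g = restrict (\<lambda>Y. \<Sum>x\<in>Y. mvW w0 p x) (Cs H')"
        unfolding g
      proof (rule restrict_ext)
        fix Y assume "Y \<in> Cs H'"
        then obtain y where y: "y \<in> Zs H'" "Y = cls H' y" unfolding Cs_def by auto
        have "phi Y \<in> Cs H" using phi_bij y unfolding bij_betw_def Cs_def by auto
        then show "(restrict (\<lambda>X. \<Sum>x\<in>X. p x) (Cs H) \<circ> phi) Y = (\<Sum>x\<in>Y. mvW w0 p x)"
          using sum_phi_mvW[OF p w0 y(1)] y(2) by simp
      qed
      then show "g \<in> Ss H'" using mvW_model[OF p w0] unfolding Ss_def by auto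
    qed
    show "Ss H' \<subseteq> ?F ` Ss H"
    proof
      fix g assume "g \<in> Ss H'"
      then obtain q where q: "q \<in> models H'" and g: "g = restrict (\<lambda>Y. \<Sum>x\<in>Y. q x) (Cs H')"
        unfolding Ss_def by auto
      have A: "?F (restrict (\<lambda>X. \<Sum>x\<in>X. ext q x) (Cs H)) = g"
        unfolding g
      proof (rule restrict_ext)
        fix Y assume "Y \<in> Cs H'"
        then obtain y where y: "y \<in> Zs H'" "Y = cls H' y" unfolding Cs_def by auto
        have "phi Y \<in> Cs H" using phi_bij y unfolding bij_betw_def Cs_def by auto
        then show "(restrict (\<lambda>X. \<Sum>x\<in>X. ext q x) (Cs H) \<circ> phi) Y = (\<Sum>x\<in>Y. q x)"
          using sum_phi_ext[OF q y(1)] y(2) by simp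
      qed
      have B: "restrict (\<lambda>X. \<Sum>x\<in>X. ext q x) (Cs H) \<in> Ss H"
        using ext_model'[OF q] unfolding Ss_def by auto
      show "g \<in> ?F ` Ss H" using B A by force
    qed
  qed
  then show ?thesis unfolding oeq_def Inv_def fst_conv snd_conv by (intro exI[of _ phi] conjI phi_bij)
qed

end


lemma contraction_props:
  assumes sc: "scenario H" and c: "contraction H H'"
  shows "scenario H' \<and> oeq (Inv H) (Inv H') \<and> (Zs H = verts H \<longrightarrow> Zs H' = verts H')"
proof -
  obtain W W' where W: "contractible H W" "W' \<subseteq> W" "W' \<noteq> {}" "H' = induced H (verts H - (W - W'))"
    using c unfolding contraction_def by auto
  interpret csetup H W W' using sc W by unfold_locales auto
  show ?thesis using scH' Inv_contr allZ W(4) by simp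
qed

lemma rtc_props:
  assumes "contraction\<^sup>*\<^sup>* A B" "scenario A" "Zs A = verts A"
  shows "scenario B \<and> Zs B = verts B \<and> oeq (Inv A) (Inv B)"
  using assms
proof (induction rule: rtranclp_induct)
  case base
  then show ?case unfolding Inv_def using oeq_refl[OF Ss_ext] by simp
next
  case (step y z)
  then have y: "scenario y" "Zs y = verts y" "oeq (Inv A) (Inv y)" by auto
  have z: "scenario z" "oeq (Inv y) (Inv z)" "Zs z = verts z"
    using contraction_props[OF y(1) step(2)] y(2) by auto
  have "oeq (Inv A) (Inv z)" using oeq_trans y(3) z(2) unfolding Inv_def by blast
  then show ?case using z by auto
qed

lemma remove_zero_props:
  assumes sc: "scenario H"
  shows "scenario (remove_zero H) \<and> Zs (remove_zero H) = verts (remove_zero H) \<and> Inv (remove_zero H) = Inv H"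
proof -
  have a: "Inv (remove_zero H) = Inv H \<and> Zs (remove_zero H) = Zs H"
    unfolding remove_zero_def Zs_def[symmetric]
    by (rule Inv_zero[OF sc Zs_sub]) (auto simp: Zs_def)
  have "scenario (remove_zero H)"
    unfolding remove_zero_def Zs_def[symmetric] scenario_def verts_induced edges_induced
  proof (intro conjI)
    show "finite (Zs H)" using scenarioD(1)[OF sc] Zs_sub[of H] finite_subset by blast
    show "\<forall>e\<in>(\<lambda>e. e \<inter> Zs H) ` edges H. e \<subseteq> Zs H" by auto
    show "Zs H = \<Union> ((\<lambda>e. e \<inter> Zs H) ` edges H)" using scenarioD(3)[OF sc] Zs_sub[of H] by auto
  qed
  moreover have "verts (remove_zero H) = Zs H" unfolding remove_zero_def Zs_def by simp
  ultimately show ?thesis using a by simp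
qed

lemma choice_props:
  assumes sc: "scenario H" and ch: "is_vcz_choice H K"
  shows "oeq (Inv H) (verts K, models K)"
proof -
  let ?Hz = "remove_zero H"
  obtain Hc where Hc: "contraction\<^sup>*\<^sup>* ?Hz Hc"
    and mn: "\<And>H''. contraction\<^sup>*\<^sup>* ?Hz H'' \<Longrightarrow> card (verts Hc) \<le> card (verts H'')"
    and VK: "verts K = verts Hc" and EK: "edges K \<subseteq> edges (completion Hc)"
    and scK: "scenario K" and vi: "virt_incl K (completion Hc)"
    using ch unfolding is_vcz_choice_def by blast
  have z: "scenario ?Hz" "Zs ?Hz = verts ?Hz" "Inv ?Hz = Inv H" using remove_zero_props[OF sc] by auto
  have c: "scenario Hc" "Zs Hc = verts Hc" "oeq (Inv ?Hz) (Inv Hc)" using rtc_props[OF Hc z(1,2)] by auto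
  have single: "u = v" if u: "u \<in> verts Hc" and v: "v \<in> verts Hc" and e: "eqv Hc u v" for u v
  proof (rule ccontr)
    assume uv: "u \<noteq> v"
    have "contractible Hc {u, v}" using u v e unfolding contractible_def eqv_def by auto
    then have "contraction Hc (induced Hc (verts Hc - ({u,v} - {u})))"
      unfolding contraction_def by blast
    then have "contraction\<^sup>*\<^sup>* ?Hz (induced Hc (verts Hc - ({u,v} - {u})))" using Hc by simp
    then have "card (verts Hc) \<le> card (verts Hc - ({u,v} - {u}))" using mn by fastforce
    moreover have "verts Hc - ({u,v} - {u}) = verts Hc - {v}" using uv by auto
    moreover have "card (verts Hc - {v}) < card (verts Hc)"
      by (rule card_Diff1_less[OF scenarioD(1)[OF c(1)] v])
    ultimately show False by simp
  qed
  have cl: "cls Hc v = {v}" if v: "v \<in> verts Hc" for v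
    unfolding cls_def c(2) using single v eqv_refl[of Hc v] by auto
  have C: "Cs Hc = (\<lambda>v. {v}) ` verts Hc" unfolding Cs_def c(2) using cl by simp
  have bij: "bij_betw (\<lambda>v. {v}) (verts Hc) (Cs Hc)" unfolding C by (simp add: bij_betw_def inj_on_def)
  have "models Hc = (\<lambda>f. restrict (f \<circ> (\<lambda>v. {v})) (verts Hc)) ` Ss Hc"
  proof -
    have "(\<lambda>f. restrict (f \<circ> (\<lambda>v. {v})) (verts Hc)) ` Ss Hc
        = (\<lambda>p. restrict (restrict (\<lambda>X. \<Sum>x\<in>X. p x) (Cs Hc) \<circ> (\<lambda>v. {v})) (verts Hc)) ` models Hc"
      unfolding Ss_def image_image ..
    also have "\<dots> = (\<lambda>p. p) ` models Hc"
    proof (rule image_cong[OF refl])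
      fix p assume p: "p \<in> models Hc"
      show "restrict (restrict (\<lambda>X. \<Sum>x\<in>X. p x) (Cs Hc) \<circ> (\<lambda>v. {v})) (verts Hc) = p"
        using modelsD(1)[OF p] unfolding C extensional_def by (auto simp: fun_eq_iff)
    qed
    finally show ?thesis by simp
  qed
  then have o1: "oeq (Inv Hc) (verts Hc, models Hc)" unfolding oeq_def Inv_def using bij by auto
  have mK: "models K = models Hc"
  proof
    have vV: "verts (completion Hc) = verts K" using vi unfolding virt_incl_def by auto
    show "models Hc \<subseteq> models K"
    proof
      fix p assume p: "p \<in> models Hc"
      show "p \<in> models K"
      proof (rule modelsI)
        show "p \<in> extensional (verts K)" using modelsD(1)[OF p] VK by simp
        show "0 \<le> p v" "p v \<le> 1" if "v \<in> verts K" for v using that VK modelsD(2,3)[OF p] by auto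
        show "(\<Sum>v\<in>e. p v) = 1" if "e \<in> edges K" for e
          using EK that p unfolding completion_def edges_def virtual_edge_def by auto
      qed
    qed
    show "models K \<subseteq> models Hc"
    proof
      fix p assume p: "p \<in> models K"
      show "p \<in> models Hc"
      proof (rule modelsI)
        show "p \<in> extensional (verts Hc)" using modelsD(1)[OF p] VK by simp
        show "0 \<le> p v" "p v \<le> 1" if "v \<in> verts Hc" for v using that VK modelsD(2,3)[OF p] by auto
        show "(\<Sum>v\<in>e. p v) = 1" if e: "e \<in> edges Hc" for e
        proof -
          have "virtual_edge Hc e" unfolding virtual_edge_def
            using scenarioD(2)[OF c(1) e] modelsD(4) e by blast
          then have "e \<in> edges (completion Hc)" unfolding completion_def edges_def by simp
          then have "e \<in> edges K \<or> virtual_edge K e" using vi unfolding virt_incl_def by blast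
          then show ?thesis using modelsD(4)[OF p] p unfolding virtual_edge_def by blast
        qed
      qed
    qed
  qed
  have o2: "oeq (verts Hc, models Hc) (verts K, models K)"
    using oeq_refl[OF models_ext[of Hc]] VK mK by simp
  have "oeq (Inv H) (Inv Hc)" using c(3) z(3) by simp
  then have "oeq (Inv H) (verts Hc, models Hc)" using o1 oeq_trans unfolding Inv_def by blast
  then show ?thesis using o2 oeq_trans unfolding Inv_def by blast
qed

lemma vcz_props:
  assumes "vcz_equiv A B" shows "scenario A \<and> scenario B \<and> oeq (Inv A) (Inv B)"
  using assms
proof (induction rule: vcz_equiv.induct)
  case (vcz_refl H)
  then show ?case unfolding Inv_def using oeq_refl[OF Ss_ext] by simp
next
  case (vcz_virt H H')
  then show ?case using Inv_virt[of H H'] unfolding Inv_def using oeq_refl[OF Ss_ext] by simp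
next
  case (vcz_contr H H')
  then show ?case using contraction_props by blast
next
  case (vcz_zero H W)
  then have "Inv (induced H W) = Inv H" using Inv_zero[of H W] unfolding zero_reduces_def by blast
  then show ?case using vcz_zero unfolding Inv_def using oeq_refl[OF Ss_ext] by simp
next
  case (vcz_sym H H')
  then show ?case using oeq_sym[OF _ Ss_ext] unfolding Inv_def by blast
next
  case (vcz_trans H H' H'')
  then show ?case using oeq_trans unfolding Inv_def by blast
qed

theorem theorem2p1:
  fixes H1 H2 K1 K2 :: "'a hypergraph"
  assumes "scenario H1" and "scenario H2"
    and "vcz_equiv H1 H2"
    and "is_vcz_choice H1 K1" and "is_vcz_choice H2 K2"
  shows "obs_equiv K1 K2"
proof -
  have a: "oeq (Inv H1) (verts K1, models K1)" by (rule choice_props[OF assms(1,4)])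
  have b: "oeq (Inv H2) (verts K2, models K2)" by (rule choice_props[OF assms(2,5)])
  have c: "oeq (Inv H1) (Inv H2)" using vcz_props[OF assms(3)] by simp
  have a': "oeq (verts K1, models K1) (Inv H1)" using oeq_sym[OF _ Ss_ext] a unfolding Inv_def by blast
  have "oeq (Inv H1) (verts K2, models K2)" using c b oeq_trans unfolding Inv_def by blast
  then have "oeq (verts K1, models K1) (verts K2, models K2)" using a' oeq_trans unfolding Inv_def by blast
  then show ?thesis unfolding obs_equiv_oeq .
qed

end
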